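(* Let $0<c\le\tfrac12$. Suppose Skeptic starts with capital $\mathcal{K}_0=1$ and plays $\mathcal{P}_c$: $M_n=-c\,\overline{x}_{n-1}\mathcal{K}_{n-1}$ for all $n\ge1$. His capital is then \[ \mathcal{K}_n=\prod_{i=2}^n\bigl(1-c\,\overline{x}_{i-1}x_i\bigr). \] Then $\mathcal{K}_n(\xi)\ge0$ for all $\xi\in\Omega$ and all $n$. Moreover $\mathcal{K}_n(\xi)\to\infty$ for every path $\xi\notin E_1^c$, where \[ E_1^c:=\{\xi:\ \limsup_{n\to\infty}(1+2c)\sqrt n\,|\overline{x}_n|\ge1\}. \] That is, Skeptic can force $E_1^c$ with $\mathcal{P}_c$.
   Context: Fair-coin game: the initial capital is $\mathcal{K}_0$. In rounds $n=1,2,\dots$ Skeptic announces $M_n\in\mathbb{R}$ (depending only on $x_1,\dots,x_{n-1}$), then Reality announces $x_n\in\{-1,1\}$, and $\mathcal{K}_n:=\mathcal{K}_{n-1}+M_nx_n$. A path is an infinite sequence $\xi=x_1x_2\cdots\in\{-1,1\}^{\mathbb{N}}$, and $\Omega$ is the set of paths. We write $s_n:=x_1+\cdots+x_n$ and $\overline{x}_n:=s_n/n$, with $s_0=\overline{x}_0=0$. Skeptic forces an event $E$ if he has a strategy such that, starting from capital $1$, his capital is nonnegative at all times on all paths and tends to $\infty$ on every path not in $E$. *)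

theory Defs
  imports Complex_Main "HOL-Library.Extended_Real"
begin

text \<open>A path is a function xi :: nat => real; the moves are x_1 = xi 1, x_2 = xi 2, ...
  (the value xi 0 is unused). The set of paths Omega consists of those with every
  move x_n (n >= 1) in {-1, 1}.\<close>

definition paths :: "(nat \<Rightarrow> real) set" where
  "paths = {xi. \<forall>n\<ge>1. xi n \<in> {-1, 1}}"

definition psum :: "(nat \<Rightarrow> real) \<Rightarrow> nat \<Rightarrow> real" where
  "psum xi n = (\<Sum>i=1..n. xi i)"

text \<open>xbar_n = s_n / n, with xbar_0 = 0 (division by zero gives 0)\<close>
definition xbar :: "(nat \<Rightarrow> real) \<Rightarrow> nat \<Rightarrow> real" where
  "xbar xi n = psum xi n / real n"

fun capital_P :: "real \<Rightarrow> (nat \<Rightarrow> real) \<Rightarrow> nat \<Rightarrow> real" where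
  "capital_P c xi 0 = 1"
| "capital_P c xi (Suc n) =
     capital_P c xi n + (- c * xbar xi n * capital_P c xi n) * xi (Suc n)"

definition E1c :: "real \<Rightarrow> (nat \<Rightarrow> real) set" where
  "E1c c = {xi \<in> paths.
     limsup (\<lambda>n. ereal ((1 + 2*c) * sqrt (real n) * \<bar>xbar xi n\<bar>)) \<ge> 1}"

end

theory Submission
  imports Defs
begin

lemma ln_lb:
  fixes t :: real
  assumes "\<bar>t\<bar> \<le> 1/2"
  shows "t - 2 * t\<^sup>2 \<le> ln (1 + t)"
proof (cases "t \<ge> 0")
  case True
  have "t - t\<^sup>2 \<le> ln (1 + t)" using True assms by (intro ln_one_plus_pos_lower_bound) auto
  moreover have "t\<^sup>2 \<ge> 0" by simp
  ultimately show ?thesis by linarith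
next
  case False
  have "- (-t) - 2 * (-t)\<^sup>2 \<le> ln (1 - (-t))" using False assms by (intro ln_one_minus_pos_lower_bound) auto
  then show ?thesis by simp
qed

lemma xbar_Suc:
  "xbar xi (Suc m) = (real m * xbar xi m + xi (Suc m)) / (real m + 1)"
  by (simp add: xbar_def psum_def add.commute)

lemma xbar_bound:
  assumes "xi \<in> paths"
  shows "\<bar>xbar xi n\<bar> \<le> 1"
proof (cases "n = 0")
  case True then show ?thesis by (simp add: xbar_def)
next
  case False
  have "\<bar>psum xi n\<bar> \<le> (\<Sum>i=1..n. \<bar>xi i\<bar>)" unfolding psum_def by (rule sum_abs)
  also have "\<dots> = (\<Sum>i=1..n. 1)"
    using assms by (intro sum.cong) (auto simp: paths_def)
  finally have "\<bar>psum xi n\<bar> \<le> real n" by simp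
  then show ?thesis using False by (simp add: xbar_def divide_le_eq_1)
qed

lemma factor_pos:
  assumes "xi \<in> paths" "0 < c" "c \<le> 1/2" "n \<ge> 1"
  shows "1 - c * xbar xi m * xi n \<ge> 1/2"
proof -
  have "\<bar>xi n\<bar> = 1" using assms by (auto simp: paths_def)
  hence "\<bar>c * xbar xi m * xi n\<bar> = c * \<bar>xbar xi m\<bar>" using assms by (simp add: abs_mult)
  also have "\<dots> \<le> c" using xbar_bound[OF assms(1)] assms by (simp add: mult_left_le)
  finally show ?thesis using assms by linarith
qed

lemma cap_Suc: "capital_P c xi (Suc n) = capital_P c xi n * (1 - c * xbar xi n * xi (Suc n))"
  by (simp add: algebra_simps)

lemma cap_prod: "capital_P c xi n = (\<Prod>i=2..n. 1 - c * xbar xi (i-1) * xi i)"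
proof (induction n)
  case 0 then show ?case by simp
next
  case (Suc n)
  show ?case
  proof (cases "n = 0")
    case True then show ?thesis by (simp add: xbar_def)
  next
    case False
    then have "{2..Suc n} = insert (Suc n) {2..n}" by auto
    then have "(\<Prod>i=2..Suc n. 1 - c * xbar xi (i-1) * xi i)
       = (1 - c * xbar xi n * xi (Suc n)) * (\<Prod>i=2..n. 1 - c * xbar xi (i-1) * xi i)" by simp
    then show ?thesis by (subst cap_Suc) (simp only: Suc.IH mult.commute)
  qed
qed

lemma cap_pos:
  assumes "xi \<in> paths" "0 < c" "c \<le> 1/2"
  shows "capital_P c xi n > 0"
proof (induction n)
  case 0 then show ?case by simp
next
  case (Suc n)
  have "1 - c * xbar xi n * xi (Suc n) \<ge> 1/2" by (rule factor_pos) (use assms in auto)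
  then show ?case using Suc cap_Suc by simp
qed


lemma alg_step:
  fixes m y x c :: real
  assumes m: "m \<ge> 1" and x: "x\<^sup>2 = 1" and c: "0 < c" "c \<le> 1/2"
    and q0: "(1+2*c)\<^sup>2 * (m * y\<^sup>2) \<le> 1"
    and q1: "(1+2*c)\<^sup>2 * ((m*y+x)\<^sup>2/(m+1)) \<le> 1"
  shows "(-c*y*x) - 2*(-c*y*x)\<^sup>2 + c/2 * ((m*y+x)\<^sup>2/(m+1) - m*y\<^sup>2)
          \<ge> 2*c^3/(1+2*c)\<^sup>2 / m"
proof -
  define Q0 where "Q0 = m * y\<^sup>2"
  define Q1 where "Q1 = (m*y+x)\<^sup>2/(m+1)"
  define A where "A = (1+2*c)\<^sup>2"
  have A: "A > 0" using c by (simp add: A_def)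
  have sq: "(-c*y*x)\<^sup>2 = c\<^sup>2*y\<^sup>2" using x by (simp add: power_mult_distrib)
  have e0: "Q1*(m+1) = (m*y+x)\<^sup>2" using m by (simp add: Q1_def)
  have e1: "(m*y+x)\<^sup>2 = m*m*y*y + 2*m*y*x + x*x" by (simp add: power2_eq_square algebra_simps)
  have e: "Q1*(m+1) = m*m*y*y + 2*m*y*x + 1"
    using e0 e1 x by (simp add: power2_eq_square)
  have gen: "(-c*y*x) - 2*(c\<^sup>2*y\<^sup>2) + c/2*(Q1-Q0) - c/2*(1 - Q1 - 4*c*Q0)/m
      = c/2*(Q1*(m+1) - (m*m*y*y + 2*m*y*x + 1))/m"
    using m unfolding Q0_def by (simp add: field_simps power2_eq_square)
  have id: "(-c*y*x) - 2*(-c*y*x)\<^sup>2 + c/2 * (Q1 - Q0) = c/2 * (1 - Q1 - 4*c*Q0) / m"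
    using gen e sq by simp
  have "A * Q0 \<le> 1" "A * Q1 \<le> 1" using q0 q1 by (simp_all add: A_def Q0_def Q1_def)
  then have "Q0 \<le> 1/A" "Q1 \<le> 1/A" using A by (auto simp: pos_le_divide_eq mult_ac)
  then have q0': "Q0 \<le> 1/A" and q1': "Q1 \<le> 1/A" by auto
  have "4*c*Q0 \<le> 4*c*(1/A)" using c q0' by (intro mult_left_mono) auto
  then have "1 - Q1 - 4*c*Q0 \<ge> 1 - 1/A - 4*c/A" using q1' by simp
  also have "1 - 1/A - 4*c/A = 4*c\<^sup>2/A"
  proof -
    have Aeq: "A - 1 - 4*c = 4*c\<^sup>2" by (simp add: A_def power2_eq_square algebra_simps)
    have "1 - 1/A - 4*c/A = (A - 1 - 4*c)/A" using A by (simp add: field_simps)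
    then show ?thesis using Aeq by simp
  qed
  finally have "c/2 * (1 - Q1 - 4*c*Q0) / m \<ge> c/2 * (4*c\<^sup>2/A) / m"
    using c m by (intro divide_right_mono mult_left_mono) auto
  also have "c/2 * (4*c\<^sup>2/A) / m = 2*c^3/(1+2*c)\<^sup>2 / m" by (simp add: A_def power2_eq_square power3_eq_cube)
  finally show ?thesis using id unfolding Q0_def Q1_def by linarith
qed

lemma ln_diff_le: "m \<ge> 1 \<Longrightarrow> ln (m + 1) - ln m \<le> 1 / (m::real)"
proof -
  assume m: "m \<ge> 1"
  have "m + 1 = m * (1 + 1/m)" using m by (simp add: field_simps)
  moreover have "1 + 1/m > 0" using m by (simp add: add_pos_nonneg)
  ultimately have "ln (m+1) = ln m + ln (1 + 1/m)" using m by (simp add: ln_mult)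
  moreover have "ln (1 + 1/m) \<le> 1/m" using m by (intro ln_add_one_self_le_self) simp
  ultimately show ?thesis by simp
qed

lemma main_part:
  fixes c :: real
  assumes c: "0 < c" "c \<le> 1/2" and xi: "xi \<in> paths" and nE: "xi \<notin> E1c c"
  shows "filterlim (capital_P c xi) at_top sequentially"
proof -
  have "\<not> limsup (\<lambda>n. ereal ((1 + 2*c) * sqrt (real n) * \<bar>xbar xi n\<bar>)) \<ge> 1"
    using nE xi by (simp add: E1c_def)
  then have "limsup (\<lambda>n. ereal ((1 + 2*c) * sqrt (real n) * \<bar>xbar xi n\<bar>)) < 1" by simp
  then have "eventually (\<lambda>n. ereal ((1 + 2*c) * sqrt (real n) * \<bar>xbar xi n\<bar>) < 1) sequentially"
    by (rule Limsup_lessD)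
  then obtain N0 where N0: "\<And>n. n \<ge> N0 \<Longrightarrow> (1 + 2*c) * sqrt (real n) * \<bar>xbar xi n\<bar> < 1"
    by (auto simp: eventually_sequentially)
  define N where "N = max N0 1"
  define q where "q n = real n * (xbar xi n)\<^sup>2" for n
  have qb: "(1+2*c)\<^sup>2 * q n \<le> 1" if "n \<ge> N" for n
  proof -
    have h: "(1 + 2*c) * sqrt (real n) * \<bar>xbar xi n\<bar> < 1" using N0 that by (simp add: N_def)
    have nn: "0 \<le> (1 + 2*c) * sqrt (real n) * \<bar>xbar xi n\<bar>" using c by simp
    have "((1 + 2*c) * sqrt (real n) * \<bar>xbar xi n\<bar>)\<^sup>2 \<le> 1\<^sup>2"
      using h nn by (intro power_mono) auto
    then show ?thesis by (simp add: q_def power_mult_distrib)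
  qed
  have q0: "0 \<le> q n" for n by (simp add: q_def)
  have qle: "q n \<le> 1" if "n \<ge> N" for n
  proof -
    have "1 \<le> (1+2*c)\<^sup>2" using c by simp
    then have "1 * q n \<le> (1+2*c)\<^sup>2 * q n" using q0 by (intro mult_right_mono) auto
    then show ?thesis using qb[OF that] by simp
  qed
  define L where "L n = ln (capital_P c xi n)" for n
  define \<beta> where "\<beta> = 2*c^3/(1+2*c)\<^sup>2"
  have \<beta>: "\<beta> > 0" using c by (simp add: \<beta>_def)
  define F where "F n = L n + c/2 * q n - \<beta> * ln (real n)" for n
  have stepF: "F m \<le> F (Suc m)" if m: "m \<ge> N" for m
  proof -
    have m1: "real m \<ge> 1" using m by (simp add: N_def)
    define y where "y = xbar xi m"
    define x where "x = xi (Suc m)"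
    have xd: "x = -1 \<or> x = 1" using xi by (auto simp: paths_def x_def)
    then have x: "x\<^sup>2 = 1" by auto
    have y: "\<bar>y\<bar> \<le> 1" using xbar_bound[OF xi] by (simp add: y_def)
    define t where "t = -c*y*x"
    have "\<bar>t\<bar> = c * \<bar>y\<bar>" using xd c by (auto simp: t_def abs_mult)
    also have "\<dots> \<le> c" using y c by (simp add: mult_left_le)
    finally have tb: "\<bar>t\<bar> \<le> 1/2" using c by simp
    have Lstep: "L (Suc m) = L m + ln (1 + t)"
    proof -
      have p1: "capital_P c xi m > 0" by (rule cap_pos) (use xi c in auto)
      have p2: "1 + t > 0" using tb by auto
      have "capital_P c xi (Suc m) = capital_P c xi m * (1 + t)"
        by (subst cap_Suc) (simp add: t_def x_def y_def)
      then show ?thesis using p1 p2 by (simp add: L_def ln_mult)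
    qed
    have gsq: "b * (a/b)\<^sup>2 = a\<^sup>2/b" if "b > 0" for a b :: real
      using that by (simp add: power2_eq_square field_simps)
    have "q (Suc m) = (real m + 1) * ((real m*y+x)/(real m+1))\<^sup>2"
      by (simp add: q_def xbar_Suc y_def x_def)
    also have "\<dots> = (real m*y+x)\<^sup>2/(real m+1)" by (rule gsq) simp
    finally have qS: "q (Suc m) = (real m*y+x)\<^sup>2/(real m+1)" .
    have qm: "q m = real m * y\<^sup>2" by (simp add: q_def y_def)
    have A: "t - 2*t\<^sup>2 + c/2 * (q (Suc m) - q m) \<ge> \<beta> / real m"
      unfolding qS qm t_def \<beta>_def
    proof (rule alg_step[OF m1 x c])
      show "(1 + 2 * c)\<^sup>2 * (real m * y\<^sup>2) \<le> 1" using qb[OF m] unfolding qm .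
      have "Suc m \<ge> N" using m by simp
      from qb[OF this] show "(1 + 2 * c)\<^sup>2 * ((real m * y + x)\<^sup>2 / (real m + 1)) \<le> 1"
        unfolding qS .
    qed
    have B: "\<beta> * (ln (real m + 1) - ln (real m)) \<le> \<beta> / real m"
    proof -
      have "\<beta> * (ln (real m + 1) - ln (real m)) \<le> \<beta> * (1 / real m)"
        using ln_diff_le[OF m1] \<beta> by (intro mult_left_mono) auto
      then show ?thesis by simp
    qed
    have C: "t - 2*t\<^sup>2 \<le> ln (1+t)" by (rule ln_lb[OF tb])
    show ?thesis unfolding F_def using Lstep A B C by (simp add: algebra_simps)
  qed
  have mono: "F N \<le> F n" if "n \<ge> N" for n
    using that
  proof (induction n rule: dec_induct)
    case base then show ?case by simp
  next
    case (step n) then show ?case using stepF[of n] by simp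
  qed
  have lb: "F N - c/2 + \<beta> * ln (real n) \<le> L n" if "n \<ge> N" for n
  proof -
    have "c/2 * q n \<le> c/2" using qle[OF that] c by simp
    then show ?thesis using mono[OF that] unfolding F_def by simp
  qed
  have lim1: "filterlim (\<lambda>n. F N - c/2 + \<beta> * ln (real n)) at_top sequentially"
  proof -
    have l: "filterlim (\<lambda>n. ln (real n)) at_top sequentially"
      by (rule filterlim_compose[OF ln_at_top filterlim_real_sequentially])
    have "filterlim (\<lambda>n. \<beta> * ln (real n)) at_top sequentially"
      by (rule filterlim_tendsto_pos_mult_at_top[OF tendsto_const \<beta> l])
    then show ?thesis by (rule filterlim_tendsto_add_at_top[OF tendsto_const])
  qed
  have limL: "filterlim L at_top sequentially"
    by (rule filterlim_at_top_mono[OF lim1]) (use lb in \<open>auto simp: eventually_sequentially\<close>)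
  have "filterlim (\<lambda>n. exp (L n)) at_top sequentially"
    by (rule filterlim_compose[OF exp_at_top limL])
  moreover have "exp (L n) = capital_P c xi n" for n
    unfolding L_def by (rule exp_ln) (rule cap_pos, use xi c in auto)
  ultimately show ?thesis by simp
qed

theorem lemma1:
  fixes c :: real
  assumes "0 < c" and "c \<le> 1/2"
  shows "(\<forall>xi\<in>paths. \<forall>n. capital_P c xi n = (\<Prod>i=2..n. 1 - c * xbar xi (i-1) * xi i))
    \<and> (\<forall>xi\<in>paths. \<forall>n. capital_P c xi n \<ge> 0)
    \<and> (\<forall>xi\<in>paths. xi \<notin> E1c c \<longrightarrow> filterlim (capital_P c xi) at_top sequentially)"
  using cap_prod cap_pos[OF _ assms] main_part[OF assms] less_imp_le by blast

end
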